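(* Let $C\subseteq\mathbb{R}^a$ be a polyhedral convex cone and let $\mathcal{Y}_{out}$ be the set of nonzero vertices of the polytope $C\cap B_1$. Let $\mathcal{Y}_{in}\subseteq C$ be a finite nonempty set of vectors with $\|r\|=1$ for all $r\in\mathcal{Y}_{in}$, and let $\delta>0$. Suppose that for every $d\in\mathcal{Y}_{out}$ there exists $r\in\mathcal{Y}_{in}$ with $\|d-r\|\le\delta$. Then $$d_H\big(C\cap B_1,\ \operatorname{cone}\mathcal{Y}_{in}\cap B_1\big)\le\delta.$$
   Context: $\|\cdot\|$ denotes the $\ell_1$ norm and $B_1=\{y\in\mathbb{R}^a:\|y\|\le1\}$. $\operatorname{cone}\mathcal{Y}$ is the convex conic hull of $\mathcal{Y}$. The Hausdorff distance is $d_H(X,Y)=\max\{\sup_{x\in X}\inf_{y\in Y}\|x-y\|,\sup_{y\in Y}\inf_{x\in X}\|x-y\|\}$. *)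

theory Defs
  imports "HOL-Analysis.Analysis"
begin

definition l1norm :: "real^'n \<Rightarrow> real" where
  "l1norm x = (\<Sum>i\<in>UNIV. \<bar>x $ i\<bar>)"

definition l1ball :: "(real^'n) set" where
  "l1ball = {y. l1norm y \<le> 1}"

definition hausdist_l1 :: "(real^'n) set \<Rightarrow> (real^'n) set \<Rightarrow> real" where
  "hausdist_l1 X Y = max (SUP x\<in>X. INF y\<in>Y. l1norm (x - y)) (SUP y\<in>Y. INF x\<in>X. l1norm (x - y))"

definition polyhedral_cone :: "(real^'n) set \<Rightarrow> bool" where
  "polyhedral_cone C \<longleftrightarrow> polyhedron C \<and> convex_cone C"

end

theory Submission
  imports Defs
begin

lemma l1_add: "l1norm (x + y) \<le> l1norm x + l1norm (y::real^'n)"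
  unfolding l1norm_def by (simp add: sum.distrib[symmetric] sum_mono abs_triangle_ineq)

lemma l1_scale: "l1norm (c *\<^sub>R (x::real^'n)) = \<bar>c\<bar> * l1norm x"
  unfolding l1norm_def by (simp add: abs_mult sum_distrib_left)

lemma l1_nonneg: "0 \<le> l1norm (x::real^'n)"
  unfolding l1norm_def by (simp add: sum_nonneg)

lemma l1_zero[simp]: "l1norm (0::real^'n) = 0"
  unfolding l1norm_def by simp

lemma l1_sum: "finite S \<Longrightarrow> l1norm (sum (f :: 'b \<Rightarrow> real^'n) S) \<le> (\<Sum>v\<in>S. l1norm (f v))"
proof (induction S rule: finite_induct)
  case empty then show ?case by simp
next
  case (insert a S)
  then show ?case using l1_add[of "f a" "sum f S"] by simp
qed

lemma l1_cont: "continuous_on UNIV (l1norm :: real^'n \<Rightarrow> real)"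
  unfolding l1norm_def by (intro continuous_intros)

lemma l1ball_closed: "closed (l1ball :: (real^'n) set)"
  unfolding l1ball_def
  by (intro closed_Collect_le continuous_on_const l1_cont[unfolded continuous_on_def]
      continuous_on_subset[OF l1_cont] ) auto

lemma l1ball_bounded: "bounded (l1ball :: (real^'n) set)"
  unfolding l1ball_def bounded_iff
  by (rule exI[of _ 1]) (auto intro: order_trans[OF norm_le_l1_cart] simp: l1norm_def)

lemma l1ball_convex: "convex (l1ball :: (real^'n) set)"
  unfolding convex_def l1ball_def
proof (clarsimp)
  fix x y :: "real^'n" and u v :: real
  assume h: "l1norm x \<le> 1" "l1norm y \<le> 1" "0 \<le> u" "0 \<le> v" "u + v = 1"
  have "l1norm (u *\<^sub>R x + v *\<^sub>R y) \<le> u * l1norm x + v * l1norm y"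
    using l1_add[of "u *\<^sub>R x" "v *\<^sub>R y"] h by (simp add: l1_scale)
  also have "\<dots> \<le> u * 1 + v * 1" using h by (intro add_mono mult_left_mono) auto
  finally show "l1norm (u *\<^sub>R x + v *\<^sub>R y) \<le> 1" using h by simp
qed

lemma cone_hull_sum:
  "finite S \<Longrightarrow> (\<And>v. v \<in> S \<Longrightarrow> f v \<in> convex_cone hull Y) \<Longrightarrow> sum f S \<in> convex_cone hull Y"
proof (induction S rule: finite_induct)
  case empty then show ?case by (simp add: convex_cone_hull_contains_0)
next
  case (insert a S)
  then show ?case by (simp add: convex_cone_hull_add)
qed

theorem mainTheorem9:
  fixes C :: "(real^'a) set" and Yin :: "(real^'a) set" and \<delta> :: real
  assumes "polyhedral_cone C"
    and "Yin \<subseteq> C" and "finite Yin" and "Yin \<noteq> {}"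
    and "\<forall>r\<in>Yin. l1norm r = 1"
    and "\<delta> > 0"
    and "\<forall>d\<in>{v. v extreme_point_of (C \<inter> l1ball) \<and> v \<noteq> 0}. \<exists>r\<in>Yin. l1norm (d - r) \<le> \<delta>"
  shows "hausdist_l1 (C \<inter> l1ball) (convex_cone hull Yin \<inter> l1ball) \<le> \<delta>"
proof -
  let ?X = "C \<inter> l1ball" and ?Y = "convex_cone hull Yin \<inter> l1ball"
  have poly: "polyhedron C" and cc: "convex_cone C" using assms(1) polyhedral_cone_def by auto
  have cpt: "compact ?X"
    using polyhedron_imp_closed[OF poly] l1ball_closed l1ball_bounded
    by (metis compact_eq_bounded_closed bounded_Int closed_Int)
  have cvx: "convex ?X"
    using cc l1ball_convex by (metis convex_Int convex_cone_def)
  have KM: "?X = convex hull {x. x extreme_point_of ?X}"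
    by (rule Krein_Milman_Minkowski[OF cpt cvx])
  have YX: "?Y \<subseteq> ?X"
    using hull_minimal[of Yin C convex_cone, OF assms(2) cc] by auto
  have z: "0 \<in> ?Y" by (simp add: convex_cone_hull_contains_0 l1ball_def)
  have bb: "bdd_below ((\<lambda>y. l1norm (x - y)) ` A)" for x A
    by (rule bdd_belowI[of _ 0]) (auto simp: l1_nonneg)
  have bb2: "bdd_below ((\<lambda>x. l1norm (x - y)) ` A)" for y A
    by (rule bdd_belowI[of _ 0]) (auto simp: l1_nonneg)
  have part1: "(INF y\<in>?Y. l1norm (x - y)) \<le> \<delta>" if x: "x \<in> ?X" for x
  proof -
    have "\<exists>y\<in>?Y. l1norm (x - y) \<le> \<delta>"
    proof -
      have "x \<in> convex hull {x. x extreme_point_of ?X}" using x KM by metis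
      then have "\<exists>S u. finite S \<and> S \<subseteq> {x. x extreme_point_of ?X} \<and>
        (\<forall>v\<in>S. 0 \<le> u v) \<and> sum u S = 1 \<and> sum (\<lambda>v. u v *\<^sub>R v) S = x"
        by (simp only: convex_hull_explicit mem_Collect_eq)
      then obtain S u where S: "finite S" "S \<subseteq> {x. x extreme_point_of ?X}"
        "\<forall>v\<in>S. 0 \<le> u v" "sum u S = 1" "sum (\<lambda>v. u v *\<^sub>R v) S = x"
        by blast
      define f where "f v = (if v = 0 then 0 else (SOME r. r \<in> Yin \<and> l1norm (v - r) \<le> \<delta>))" for v
      have fv: "f v \<in> convex_cone hull Yin \<and> l1norm (f v) \<le> 1 \<and> l1norm (v - f v) \<le> \<delta>"
        if "v \<in> S" for v
      proof (cases "v = 0")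
        case True then show ?thesis using assms(6)
          by (simp add: f_def convex_cone_hull_contains_0)
      next
        case False
        have "v extreme_point_of ?X" using S(2) that by (rule subsetD[THEN CollectD])
        then have "v \<in> {v. v extreme_point_of ?X \<and> v \<noteq> 0}" using False by simp
        then have "\<exists>r\<in>Yin. l1norm (v - r) \<le> \<delta>" using assms(7) by (rule bspec[rotated])
        then have ex: "\<exists>r. r \<in> Yin \<and> l1norm (v - r) \<le> \<delta>" by blast
        have "f v \<in> Yin \<and> l1norm (v - f v) \<le> \<delta>"
          using someI_ex[OF ex] False by (simp only: f_def if_False)
        then show ?thesis using assms(5) by (simp add: hull_inc)
      qed
      define y where "y = sum (\<lambda>v. u v *\<^sub>R f v) S"
      have yin: "y \<in> convex_cone hull Yin"
        unfolding y_def
      proof (rule cone_hull_sum[OF S(1)])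
        fix v assume v: "v \<in> S"
        show "u v *\<^sub>R f v \<in> convex_cone hull Yin"
          using fv[OF v] S(3) v convex_cone_hull_mul by blast
      qed
      have "l1norm y \<le> (\<Sum>v\<in>S. l1norm (u v *\<^sub>R f v))" unfolding y_def by (rule l1_sum[OF S(1)])
      also have "\<dots> \<le> (\<Sum>v\<in>S. u v * 1)"
      proof (rule sum_mono)
        fix v assume v: "v \<in> S"
        have "l1norm (u v *\<^sub>R f v) = u v * l1norm (f v)" using S(3) v by (simp add: l1_scale)
        also have "\<dots> \<le> u v * 1" using fv[OF v] S(3) v by (intro mult_left_mono) auto
        finally show "l1norm (u v *\<^sub>R f v) \<le> u v * 1" .
      qed
      finally have yb: "l1norm y \<le> 1" using S by simp
      have e: "(\<Sum>v\<in>S. u v *\<^sub>R (v - f v)) = (\<Sum>v\<in>S. u v *\<^sub>R v) - (\<Sum>v\<in>S. u v *\<^sub>R f v)"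
        by (simp add: scaleR_diff_right sum_subtractf)
      have "x - y = (\<Sum>v\<in>S. u v *\<^sub>R (v - f v))"
        unfolding e y_def S(5) ..
      then have "l1norm (x - y) \<le> (\<Sum>v\<in>S. l1norm (u v *\<^sub>R (v - f v)))"
        using l1_sum[OF S(1)] by simp
      also have "\<dots> \<le> (\<Sum>v\<in>S. u v * \<delta>)"
      proof (rule sum_mono)
        fix v assume v: "v \<in> S"
        have "l1norm (u v *\<^sub>R (v - f v)) = u v * l1norm (v - f v)" using S(3) v by (simp add: l1_scale)
        also have "\<dots> \<le> u v * \<delta>" using fv[OF v] S(3) v by (intro mult_left_mono) auto
        finally show "l1norm (u v *\<^sub>R (v - f v)) \<le> u v * \<delta>" .
      qed
      also have "\<dots> = \<delta>" using S by (simp add: sum_distrib_right[symmetric])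
      finally show ?thesis using yin yb by (auto simp: l1ball_def)
    qed
    then obtain y where "y \<in> ?Y" "l1norm (x - y) \<le> \<delta>" by blast
    then show ?thesis using cINF_lower[OF bb[of x ?Y], of y] by linarith
  qed
  have part2: "(INF x\<in>?X. l1norm (x - y)) \<le> \<delta>" if y: "y \<in> ?Y" for y
  proof -
    have "(INF x\<in>?X. l1norm (x - y)) \<le> l1norm (y - y)"
      using y YX by (intro cINF_lower bb2) auto
    then show ?thesis using assms(6) by simp
  qed
  have Xne: "?X \<noteq> {}" using z YX by auto
  have "(SUP x\<in>?X. INF y\<in>?Y. l1norm (x - y)) \<le> \<delta>"
    using Xne part1 by (intro cSUP_least) auto
  moreover have "(SUP y\<in>?Y. INF x\<in>?X. l1norm (x - y)) \<le> \<delta>"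
    using z part2 by (intro cSUP_least) auto
  ultimately show ?thesis unfolding hausdist_l1_def by simp
qed

end
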